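(* Let $(X, M, \ast)$ be a stationary fuzzy metric space (in the sense of George and Veeramani), and write $M(x,y)$ for the constant value of $M(x,y,t)$, $t>0$. Define $\hat{M}: X^2\times X^2\times(0,+\infty)\to[0,1]$ by $\hat{M}((x_1,x_2),(y_1,y_2),t)=\min\{M(x_1,y_1),M(x_2,y_2)\}$, so that $(X^2,\hat{M},\ast)$ is a fuzzy metric space. Then the function $X^2\to(0,1]$, $(x,y)\mapsto M(x,y)$, is $\mathbb{R}$-uniformly continuous with respect to $(X^2,\hat M,\ast)$; that is, for every $\varepsilon>0$ there exist $s>0$ and $\delta\in(0,1)$ such that for all $(x,z),(x',z')\in X^2$, $\hat{M}((x,z),(x',z'),s)>1-\delta$ implies $|M(x,z)-M(x',z')|<\varepsilon$.
   Context: A continuous $t$-norm $\ast$ is a continuous binary operation on $[0,1]$ that is associative, commutative, nondecreasing in each argument, and has $1$ as neutral element. A fuzzy metric space (George–Veeramani) is a triple $(X,M,\ast)$ where $X$ is a nonempty set, $\ast$ is a continuous $t$-norm, and $M: X\times X\times(0,+\infty)\to[0,1]$ satisfies, for all $x,y,z\in X$ and $s,t>0$: (GV1) $M(x,y,t)>0$; (GV2) $M(x,y,t)=1$ iff $x=y$; (GV3) $M(x,y,t)=M(y,x,t)$; (GV4) $M(x,y,t)\ast M(y,z,s)\le M(x,z,t+s)$; (GV5) $t\mapsto M(x,y,t)$ is continuous on $(0,+\infty)$. The fuzzy metric $M$ is stationary if for all $x,y\in X$ the function $t\mapsto M(x,y,t)$ is constant. A map $f:Y\to\mathbb{R}$ on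 a fuzzy metric space $(Y,N,\ast)$ is $\mathbb{R}$-uniformly continuous if for every $\varepsilon>0$ there exist $s>0$ and $\delta\in(0,1)$ such that $N(u,v,s)>1-\delta$ implies $|f(u)-f(v)|<\varepsilon$. *)

theory Defs
  imports "HOL-Analysis.Analysis"
begin

definition cont_tnorm :: "(real \<Rightarrow> real \<Rightarrow> real) \<Rightarrow> bool" where
  "cont_tnorm T \<longleftrightarrow>
     (\<forall>a\<in>{0..1}. \<forall>b\<in>{0..1}. T a b \<in> {0..1}) \<and>
     continuous_on ({0..1} \<times> {0..1}) (\<lambda>(a, b). T a b) \<and>
     (\<forall>a\<in>{0..1}. \<forall>b\<in>{0..1}. \<forall>c\<in>{0..1}. T (T a b) c = T a (T b c)) \<and>
     (\<forall>a\<in>{0..1}. \<forall>b\<in>{0..1}. T a b = T b a) \<and>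
     (\<forall>a\<in>{0..1}. \<forall>b\<in>{0..1}. \<forall>c\<in>{0..1}. \<forall>d\<in>{0..1}.
         a \<le> c \<longrightarrow> b \<le> d \<longrightarrow> T a b \<le> T c d) \<and>
     (\<forall>a\<in>{0..1}. T a 1 = a)"

definition fuzzy_metric_space ::
  "'a set \<Rightarrow> ('a \<Rightarrow> 'a \<Rightarrow> real \<Rightarrow> real) \<Rightarrow> (real \<Rightarrow> real \<Rightarrow> real) \<Rightarrow> bool" where
  "fuzzy_metric_space X M T \<longleftrightarrow> X \<noteq> {} \<and> cont_tnorm T \<and>
     (\<forall>x\<in>X. \<forall>y\<in>X. \<forall>t>0. M x y t \<in> {0..1}) \<and>
     (\<forall>x\<in>X. \<forall>y\<in>X. \<forall>t>0. M x y t > 0) \<and>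
     (\<forall>x\<in>X. \<forall>y\<in>X. \<forall>t>0. M x y t = 1 \<longleftrightarrow> x = y) \<and>
     (\<forall>x\<in>X. \<forall>y\<in>X. \<forall>t>0. M x y t = M y x t) \<and>
     (\<forall>x\<in>X. \<forall>y\<in>X. \<forall>z\<in>X. \<forall>t>0. \<forall>s>0. T (M x y t) (M y z s) \<le> M x z (t + s)) \<and>
     (\<forall>x\<in>X. \<forall>y\<in>X. continuous_on {0<..} (M x y))"

definition stationary :: "'a set \<Rightarrow> ('a \<Rightarrow> 'a \<Rightarrow> real \<Rightarrow> real) \<Rightarrow> bool" where
  "stationary X M \<longleftrightarrow> (\<forall>x\<in>X. \<forall>y\<in>X. \<forall>t>0. \<forall>s>0. M x y t = M x y s)"

text \<open>The product fuzzy metric; for stationary M, M x y 1 is the constant value.\<close>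
definition Mhat :: "('a \<Rightarrow> 'a \<Rightarrow> real \<Rightarrow> real) \<Rightarrow> 'a \<times> 'a \<Rightarrow> 'a \<times> 'a \<Rightarrow> real \<Rightarrow> real" where
  "Mhat M p q t = min (M (fst p) (fst q) 1) (M (snd p) (snd q) 1)"

definition R_uniformly_continuous ::
  "'b set \<Rightarrow> ('b \<Rightarrow> 'b \<Rightarrow> real \<Rightarrow> real) \<Rightarrow> ('b \<Rightarrow> real) \<Rightarrow> bool" where
  "R_uniformly_continuous Y N f \<longleftrightarrow>
     (\<forall>\<epsilon>>0. \<exists>s>0. \<exists>\<delta>. 0 < \<delta> \<and> \<delta> < 1 \<and>
        (\<forall>u\<in>Y. \<forall>v\<in>Y. N u v s > 1 - \<delta> \<longrightarrow> \<bar>f u - f v\<bar> < \<epsilon>))"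

end

theory Submission
  imports Defs
begin

lemma key:
  assumes fm: "fuzzy_metric_space X M T" and st: "stationary X M"
    and X: "x \<in> X" "z \<in> X" "x' \<in> X" "z' \<in> X"
    and c: "0 \<le> c" "c \<le> 1" "c \<le> M x x' 1" "c \<le> M z z' 1"
  shows "T c (T (M x' z' 1) c) \<le> M x z 1"
proof -
  have tn: "cont_tnorm T" using fm by (simp add: fuzzy_metric_space_def)
  have rng: "\<And>a b. a \<in> X \<Longrightarrow> b \<in> X \<Longrightarrow> M a b 1 \<in> {0..1}" using fm
    by (simp add: fuzzy_metric_space_def)
  have sym: "\<And>a b. a \<in> X \<Longrightarrow> b \<in> X \<Longrightarrow> M a b 1 = M b a 1" using fm
    by (simp add: fuzzy_metric_space_def)
  have tri: "\<And>a b d. a \<in> X \<Longrightarrow> b \<in> X \<Longrightarrow> d \<in> X \<Longrightarrow> T (M a b 1) (M b d 1) \<le> M a d 1"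
  proof -
    fix a b d assume "a \<in> X" "b \<in> X" "d \<in> X"
    then have "T (M a b 1) (M b d 1) \<le> M a d (1+1)" using fm
      unfolding fuzzy_metric_space_def by (meson zero_less_one)
    moreover have "M a d (1+1) = M a d 1" using st \<open>a \<in> X\<close> \<open>d \<in> X\<close>
      unfolding stationary_def by (metis one_add_one zero_less_one zero_less_two)
    ultimately show "T (M a b 1) (M b d 1) \<le> M a d 1" by simp
  qed
  have mono: "\<And>a b c d. a \<in> {0..1} \<Longrightarrow> b \<in> {0..1} \<Longrightarrow> c \<in> {0..1} \<Longrightarrow> d \<in> {0..1}
      \<Longrightarrow> a \<le> c \<Longrightarrow> b \<le> d \<Longrightarrow> T a b \<le> T c d"
    using tn unfolding cont_tnorm_def by blast
  have cl: "\<And>a b. a \<in> {0..1} \<Longrightarrow> b \<in> {0..1} \<Longrightarrow> T a b \<in> {0..1}"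
    using tn unfolding cont_tnorm_def by blast
  let ?m = "M x' z' 1"
  have m01: "?m \<in> {0..1}" using rng X by blast
  have c01: "c \<in> {0..1}" using c by simp
  have "T ?m c \<le> T ?m (M z' z 1)"
    using mono[of ?m c ?m "M z' z 1"] m01 c01 rng[of z' z] sym[of z z'] X c by auto
  also have "\<dots> \<le> M x' z 1" using tri X by blast
  finally have h1: "T ?m c \<le> M x' z 1" .
  have "T c (T ?m c) \<le> T (M x x' 1) (M x' z 1)"
    using mono[of c "T ?m c" "M x x' 1" "M x' z 1"] h1 c01 cl[OF m01 c01] rng X c by auto
  also have "\<dots> \<le> M x z 1" using tri X by blast
  finally show ?thesis .
qed

theorem mainTheorem2:
  fixes X :: "'a set" and M :: "'a \<Rightarrow> 'a \<Rightarrow> real \<Rightarrow> real" and T :: "real \<Rightarrow> real \<Rightarrow> real"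
  assumes "fuzzy_metric_space X M T" and "stationary X M"
  shows "R_uniformly_continuous (X \<times> X) (Mhat M) (\<lambda>p. M (fst p) (snd p) 1)"
  unfolding R_uniformly_continuous_def
proof (intro allI impI)
  fix e :: real assume e: "e > 0"
  have tn: "cont_tnorm T" using assms(1) by (simp add: fuzzy_metric_space_def)
  have cl: "\<And>a b. a \<in> {0..1} \<Longrightarrow> b \<in> {0..1} \<Longrightarrow> T a b \<in> {0..1}"
    using tn unfolding cont_tnorm_def by blast
  have Ta1: "\<And>a. a \<in> {0..1} \<Longrightarrow> T a 1 = a"
    using tn unfolding cont_tnorm_def by blast
  have T1: "\<And>a. a \<in> {0..1} \<Longrightarrow> T 1 a = a"
    using tn Ta1 unfolding cont_tnorm_def by (metis atLeastAtMost_iff order_refl zero_le_one)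
  have Tc: "continuous_on ({0..1} \<times> {0..1}) (\<lambda>(a, b). T a b)"
    using tn unfolding cont_tnorm_def by blast
  define S :: "(real \<times> real) set" where "S = {0..1} \<times> {0..1}"
  define h where "h = (\<lambda>p::real\<times>real. T (fst p) (T (snd p) (fst p)))"
  have inner: "continuous_on S (\<lambda>p. T (snd p) (fst p))"
  proof -
    have "continuous_on S (\<lambda>p. (snd p, fst p))" by (intro continuous_intros)
    moreover have "(\<lambda>p. (snd p, fst p)) ` S \<subseteq> {0..1} \<times> {0..1}" unfolding S_def by auto
    ultimately have "continuous_on S ((\<lambda>(a, b). T a b) \<circ> (\<lambda>p. (snd p, fst p)))"
      using continuous_on_compose continuous_on_subset Tc by blast
    then show ?thesis by (simp add: o_def)
  qed
  have hc: "continuous_on S h"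
  proof -
    have "continuous_on S (\<lambda>p. (fst p, T (snd p) (fst p)))"
      by (intro continuous_intros inner)
    moreover have "(\<lambda>p. (fst p, T (snd p) (fst p))) ` S \<subseteq> {0..1} \<times> {0..1}"
      unfolding S_def using cl by auto
    ultimately have "continuous_on S ((\<lambda>(a, b). T a b) \<circ> (\<lambda>p. (fst p, T (snd p) (fst p))))"
      using continuous_on_compose continuous_on_subset Tc by blast
    then show ?thesis by (simp add: o_def h_def)
  qed
  have "compact S" unfolding S_def by (intro compact_Times compact_Icc)
  then have "uniformly_continuous_on S h" using hc compact_uniformly_continuous by blast
  then obtain d where d: "d > 0" and dH: "\<And>p q. p \<in> S \<Longrightarrow> q \<in> S \<Longrightarrow> dist q p < d \<Longrightarrow> dist (h q) (h p) < e"
    unfolding uniformly_continuous_on_def using e by metis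
  define \<delta> where "\<delta> = min (d/2) (1/2)"
  have dl: "0 < \<delta>" "\<delta> < 1" "\<delta> < d" using d by (auto simp: \<delta>_def)
  have close: "m - e < h (1 - \<delta>, m)" if "m \<in> {0..1}" for m
  proof -
    have "(1, m) \<in> S" "(1 - \<delta>, m) \<in> S" using that dl unfolding S_def by auto
    moreover have "dist (1 - \<delta>, m) (1::real, m) < d" using dl
      by (simp add: dist_Pair_Pair dist_real_def)
    ultimately have "dist (h (1 - \<delta>, m)) (h (1, m)) < e" using dH by blast
    moreover have "h (1, m) = m" unfolding h_def using T1 Ta1 that by simp
    ultimately show ?thesis by (simp add: dist_real_def)
  qed
  have rng: "\<And>a b. a \<in> X \<Longrightarrow> b \<in> X \<Longrightarrow> M a b 1 \<in> {0..1}" using assms(1)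
    by (simp add: fuzzy_metric_space_def)
  have sym: "\<And>a b. a \<in> X \<Longrightarrow> b \<in> X \<Longrightarrow> M a b 1 = M b a 1" using assms(1)
    by (simp add: fuzzy_metric_space_def)
  show "\<exists>s>0. \<exists>\<delta>. 0 < \<delta> \<and> \<delta> < 1 \<and> (\<forall>u\<in>X \<times> X. \<forall>v\<in>X \<times> X. 1 - \<delta> < Mhat M u v s \<longrightarrow>
          \<bar>M (fst u) (snd u) 1 - M (fst v) (snd v) 1\<bar> < e)"
  proof -
  have "\<forall>u\<in>X \<times> X. \<forall>v\<in>X \<times> X. 1 - \<delta> < Mhat M u v 1 \<longrightarrow>
          \<bar>M (fst u) (snd u) 1 - M (fst v) (snd v) 1\<bar> < e"
  proof (intro ballI impI)
    fix u v assume u: "u \<in> X \<times> X" and v: "v \<in> X \<times> X" and lt: "1 - \<delta> < Mhat M u v 1"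
    obtain x z where u': "u = (x, z)" by (cases u)
    obtain x' z' where v': "v = (x', z')" by (cases v)
    have X: "x \<in> X" "z \<in> X" "x' \<in> X" "z' \<in> X" using u v u' v' by auto
    have a: "1 - \<delta> \<le> M x x' 1" "1 - \<delta> \<le> M z z' 1" using lt u' v' by (auto simp: Mhat_def)
    have k1: "h (1 - \<delta>, M x' z' 1) \<le> M x z 1"
      using key[OF assms X, of "1 - \<delta>"] a dl unfolding h_def by simp
    have k2: "h (1 - \<delta>, M x z 1) \<le> M x' z' 1"
      using key[OF assms X(3,4,1,2), of "1 - \<delta>"] a dl sym X unfolding h_def by simp
    have r1: "M x' z' 1 \<in> {0..1}" "M x z 1 \<in> {0..1}" using rng X by blast+
    have "M x' z' 1 - e < M x z 1" using close[OF r1(1)] k1 by linarith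
    moreover have "M x z 1 - e < M x' z' 1" using close[OF r1(2)] k2 by linarith
    ultimately show "\<bar>M (fst u) (snd u) 1 - M (fst v) (snd v) 1\<bar> < e" using u' v' by auto
  qed
  note H = this
  show ?thesis
    apply (rule exI[of _ 1])
    apply (rule conjI, simp)
    apply (rule exI[of _ \<delta>])
    using dl(1,2) H by simp
  qed
qed

end
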